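(* Let $\gamma\in(0,1)$, and let $\hat c^1,\hat c^2,\dots$ be i.i.d. real random variables with mean $c$ and variance $\sigma^2\in(0,\infty)$. Fix $n\ge2$ and deterministic stepsizes $\alpha_0,\dots,\alpha_{n-2}\in[0,1]$. Define $\bar v^0=0$ and, for $1\le m\le n-1$, $\hat v^m=\hat c^m+\gamma\bar v^{m-1}$, $\bar v^m=(1-\alpha_{m-1})\bar v^{m-1}+\alpha_{m-1}\hat v^m$; let $\hat v^n=\hat c^n+\gamma\bar v^{n-1}$ and, for $a\in\mathbb{R}$, $\bar v^n(a)=(1-a)\bar v^{n-1}+a\hat v^n$. Define $\delta^1=\alpha_0$, $\lambda^1=\alpha_0^2$ and, for $1<m\le n-1$, $\delta^m=\alpha_{m-1}+(1-(1-\gamma)\alpha_{m-1})\delta^{m-1}$, $\lambda^m=\alpha_{m-1}^2+(1-(1-\gamma)\alpha_{m-1})^2\lambda^{m-1}$. Then the value of $a\in[0,1]$ minimizing $\mathbb{E}\big[(\bar v^n(a)-\mathbb{E}\hat v^n)^2\big]$ is $$\alpha_{n-1}=\frac{(1-\gamma)\lambda^{n-1}\sigma^2+\big(1-(1-\gamma)\delta^{n-1}\big)^2c^2}{(1-\gamma)^2\lambda^{n-1}\sigma^2+\big(1-(1-\gamma)\delta^{n-1}\big)^2c^2+\sigma^2}.$$ *)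

theory Defs
  imports "HOL-Probability.Probability"
begin

fun vbar :: "real \<Rightarrow> (nat \<Rightarrow> real) \<Rightarrow> (nat \<Rightarrow> 'a \<Rightarrow> real) \<Rightarrow> nat \<Rightarrow> 'a \<Rightarrow> real" where
  "vbar g al X 0 = (\<lambda>\<omega>. 0)"
| "vbar g al X (Suc m) =
     (\<lambda>\<omega>. (1 - al m) * vbar g al X m \<omega> + al m * (X (Suc m) \<omega> + g * vbar g al X m \<omega>))"

definition vhat :: "real \<Rightarrow> (nat \<Rightarrow> real) \<Rightarrow> (nat \<Rightarrow> 'a \<Rightarrow> real) \<Rightarrow> nat \<Rightarrow> 'a \<Rightarrow> real" where
  "vhat g al X m = (\<lambda>\<omega>. X m \<omega> + g * vbar g al X (m - 1) \<omega>)"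

definition vbar_last :: "real \<Rightarrow> (nat \<Rightarrow> real) \<Rightarrow> (nat \<Rightarrow> 'a \<Rightarrow> real) \<Rightarrow> nat \<Rightarrow> real \<Rightarrow> 'a \<Rightarrow> real" where
  "vbar_last g al X n a = (\<lambda>\<omega>. (1 - a) * vbar g al X (n - 1) \<omega> + a * vhat g al X n \<omega>)"

text \<open>delta and lambda sequences; index 0 is an auxiliary value 0 so that
  delta 1 = alpha_0 and lambda 1 = alpha_0^2 as in the paper.\<close>
fun delta :: "real \<Rightarrow> (nat \<Rightarrow> real) \<Rightarrow> nat \<Rightarrow> real" where
  "delta g al 0 = 0"
| "delta g al (Suc m) = al m + (1 - (1 - g) * al m) * delta g al m"

fun lam :: "real \<Rightarrow> (nat \<Rightarrow> real) \<Rightarrow> nat \<Rightarrow> real" where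
  "lam g al 0 = 0"
| "lam g al (Suc m) = (al m)\<^sup>2 + (1 - (1 - g) * al m)\<^sup>2 * lam g al m"

end

theory Submission
  imports Defs
begin

lemma ab: "\<bar>(a::real) * b\<bar> \<le> a\<^sup>2 + b\<^sup>2"
proof -
  have "0 \<le> (\<bar>a\<bar> - \<bar>b\<bar>)\<^sup>2" by simp
  hence "0 \<le> a\<^sup>2 - 2 * \<bar>a\<bar> * \<bar>b\<bar> + b\<^sup>2" by (simp add: power2_diff)
  moreover have "0 \<le> \<bar>a\<bar> * \<bar>b\<bar>" by simp
  ultimately show ?thesis unfolding abs_mult by linarith
qed

context prob_space begin

lemma sqi_prod:
  fixes f g :: "'a \<Rightarrow> real"
  assumes "f \<in> borel_measurable M" "g \<in> borel_measurable M"
    "integrable M (\<lambda>x. (f x)\<^sup>2)" "integrable M (\<lambda>x. (g x)\<^sup>2)"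
  shows "integrable M (\<lambda>x. f x * g x)"
proof (rule Bochner_Integration.integrable_bound[where f="\<lambda>x. (f x)\<^sup>2 + (g x)\<^sup>2"])
  show "integrable M (\<lambda>x. (f x)\<^sup>2 + (g x)\<^sup>2)" using assms by auto
  show "(\<lambda>x. f x * g x) \<in> borel_measurable M" using assms by auto
  show "AE x in M. norm (f x * g x) \<le> norm ((f x)\<^sup>2 + (g x)\<^sup>2)"
  proof (rule AE_I2)
    fix x
    have "\<bar>f x * g x\<bar> \<le> (f x)\<^sup>2 + (g x)\<^sup>2"
      by (rule ab)
    thus "norm (f x * g x) \<le> norm ((f x)\<^sup>2 + (g x)\<^sup>2)" by simp
  qed
qed

lemma sqi_int:
  fixes f :: "'a \<Rightarrow> real"
  assumes "f \<in> borel_measurable M" "integrable M (\<lambda>x. (f x)\<^sup>2)"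
  shows "integrable M f"
proof (rule Bochner_Integration.integrable_bound[where f="\<lambda>x. 1 + (f x)\<^sup>2"])
  show "integrable M (\<lambda>x. 1 + (f x)\<^sup>2)" using assms by auto
  show "f \<in> borel_measurable M" using assms by auto
  show "AE x in M. norm (f x) \<le> norm (1 + (f x)\<^sup>2)"
  proof (rule AE_I2)
    fix x
    have "\<bar>f x\<bar> \<le> 1 + (f x)\<^sup>2"
      using ab[of "f x" 1] by simp
    thus "norm (f x) \<le> norm (1 + (f x)\<^sup>2)" by simp
  qed
qed

lemma lin:
  fixes f g :: "'a \<Rightarrow> real"
  assumes "integrable M f" "integrable M g"
  shows "(\<integral>x. x1 * f x + y1 * g x + z \<partial>M) = x1 * (\<integral>x. f x \<partial>M) + y1 * (\<integral>x. g x \<partial>M) + z"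
  using assms by (simp add: prob_space)

lemma quad:
  fixes f g :: "'a \<Rightarrow> real"
  assumes "f \<in> borel_measurable M" "g \<in> borel_measurable M"
    "integrable M (\<lambda>x. (f x)\<^sup>2)" "integrable M (\<lambda>x. (g x)\<^sup>2)"
  shows "integrable M (\<lambda>x. (x1 * f x + y1 * g x + z)\<^sup>2)"
    "(\<integral>x. (x1 * f x + y1 * g x + z)\<^sup>2 \<partial>M) = x1\<^sup>2 * (\<integral>x. (f x)\<^sup>2 \<partial>M) + y1\<^sup>2 * (\<integral>x. (g x)\<^sup>2 \<partial>M) + z\<^sup>2
       + 2*x1*y1 * (\<integral>x. f x * g x \<partial>M) + 2*x1*z * (\<integral>x. f x \<partial>M) + 2*y1*z * (\<integral>x. g x \<partial>M)"
proof -
  have fg: "integrable M (\<lambda>x. f x * g x)" by (rule sqi_prod[OF assms])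
  have f: "integrable M f" by (rule sqi_int[OF assms(1,3)])
  have g: "integrable M g" by (rule sqi_int[OF assms(2,4)])
  have eq: "(\<lambda>x. (x1 * f x + y1 * g x + z)\<^sup>2) = (\<lambda>x. x1\<^sup>2 * (f x)\<^sup>2 + y1\<^sup>2 * (g x)\<^sup>2 + z\<^sup>2
       + 2*x1*y1 * (f x * g x) + 2*x1*z * f x + 2*y1*z * g x)"
    by (rule ext) (simp add: power2_eq_square algebra_simps)
  show "integrable M (\<lambda>x. (x1 * f x + y1 * g x + z)\<^sup>2)"
    unfolding eq using assms fg f g by auto
  show "(\<integral>x. (x1 * f x + y1 * g x + z)\<^sup>2 \<partial>M) = x1\<^sup>2 * (\<integral>x. (f x)\<^sup>2 \<partial>M) + y1\<^sup>2 * (\<integral>x. (g x)\<^sup>2 \<partial>M) + z\<^sup>2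
       + 2*x1*y1 * (\<integral>x. f x * g x \<partial>M) + 2*x1*z * (\<integral>x. f x \<partial>M) + 2*y1*z * (\<integral>x. g x \<partial>M)"
    unfolding eq using assms fg f g by (simp add: prob_space)
qed

end

theorem theorem3:
  fixes M :: "'a measure" and X :: "nat \<Rightarrow> 'a \<Rightarrow> real"
    and \<gamma> c \<sigma> :: real and n :: nat and \<alpha> :: "nat \<Rightarrow> real"
  assumes "prob_space M"
    and "\<gamma> \<in> {0<..<1}"
    and indep: "prob_space.indep_vars M (\<lambda>_. borel) X {1..}"
    and ident: "\<And>i. i \<ge> 1 \<Longrightarrow> distr M borel (X i) = distr M borel (X 1)"
    and "\<And>i. i \<ge> 1 \<Longrightarrow> integrable M (X i)"
    and "\<And>i. i \<ge> 1 \<Longrightarrow> integrable M (\<lambda>\<omega>. (X i \<omega>)\<^sup>2)"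
    and mean: "\<And>i. i \<ge> 1 \<Longrightarrow> (\<integral>\<omega>. X i \<omega> \<partial>M) = c"
    and var: "\<And>i. i \<ge> 1 \<Longrightarrow> (\<integral>\<omega>. (X i \<omega> - c)\<^sup>2 \<partial>M) = \<sigma>\<^sup>2"
    and "\<sigma> > 0"
    and "n \<ge> 2"
    and steps: "\<And>m. m \<le> n - 2 \<Longrightarrow> \<alpha> m \<in> {0..1}"
  shows
    "let F = (\<lambda>a. \<integral>\<omega>. (vbar_last \<gamma> \<alpha> X n a \<omega> - (\<integral>\<omega>'. vhat \<gamma> \<alpha> X n \<omega>' \<partial>M))\<^sup>2 \<partial>M);
         L = lam \<gamma> \<alpha> (n - 1); D = delta \<gamma> \<alpha> (n - 1);
         A = ((1 - \<gamma>) * L * \<sigma>\<^sup>2 + (1 - (1 - \<gamma>) * D)\<^sup>2 * c\<^sup>2) /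
             ((1 - \<gamma>)\<^sup>2 * L * \<sigma>\<^sup>2 + (1 - (1 - \<gamma>) * D)\<^sup>2 * c\<^sup>2 + \<sigma>\<^sup>2)
     in A \<in> {0..1} \<and> (\<forall>a\<in>{0..1}. a \<noteq> A \<longrightarrow> F A < F a)"
proof -
  interpret P: prob_space M by fact
  define \<beta> where "\<beta> = 1 - \<gamma>"
  have g01: "0 < \<gamma>" "\<gamma> < 1" using assms(2) by auto
  define Y where "Y = (\<lambda>j \<omega>. X j \<omega> - c)"
  define W where "W = (\<lambda>m \<omega>. vbar \<gamma> \<alpha> X m \<omega> - c * delta \<gamma> \<alpha> m)"
  have Xm: "X i \<in> borel_measurable M" if "i \<ge> 1" for i
    using assms(5)[OF that] by (rule borel_measurable_integrable)
  have Ym: "Y i \<in> borel_measurable M" if "i \<ge> 1" for i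
    unfolding Y_def using Xm[OF that] by auto
  have Yi: "integrable M (\<lambda>\<omega>. (Y i \<omega>)\<^sup>2)" if "i \<ge> 1" for i
  proof -
    have "(\<lambda>\<omega>. (Y i \<omega>)\<^sup>2) = (\<lambda>\<omega>. (X i \<omega>)\<^sup>2 - 2 * c * X i \<omega> + c\<^sup>2)"
      unfolding Y_def by (rule ext) (simp add: power2_diff)
    thus ?thesis using assms(5,6)[OF that] by auto
  qed
  have Y0: "(\<integral>\<omega>. Y i \<omega> \<partial>M) = 0" if "i \<ge> 1" for i
    unfolding Y_def using assms(5)[OF that] mean[OF that] by (simp add: P.prob_space)
  have Y2: "(\<integral>\<omega>. (Y i \<omega>)\<^sup>2 \<partial>M) = \<sigma>\<^sup>2" if "i \<ge> 1" for i
    unfolding Y_def using var[OF that] by simp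
  have indY: "P.indep_vars (\<lambda>_. borel) Y {1..}"
    unfolding Y_def
    by (rule P.indep_vars_compose2[where Y="\<lambda>_ x. x - c", OF indep]) auto
  have Yint: "integrable M (Y i)" if "i \<ge> 1" for i
    using P.sqi_int[OF Ym[OF that] Yi[OF that]] .
  have Yorth: "(\<integral>\<omega>. Y i \<omega> * Y j \<omega> \<partial>M) = 0" if "i \<ge> 1" "j \<ge> 1" "i \<noteq> j" for i j
  proof -
    have ind2: "P.indep_vars (\<lambda>_. borel) Y {i, j}"
      by (rule P.indep_vars_subset[OF indY]) (use that in auto)
    have "(\<integral>\<omega>. (\<Prod>k\<in>{i,j}. Y k \<omega>) \<partial>M) = (\<Prod>k\<in>{i,j}. \<integral>\<omega>. Y k \<omega> \<partial>M)"
      by (rule P.indep_vars_lebesgue_integral[OF _ ind2]) (use that Yint in auto)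
    thus ?thesis using that Y0 by simp
  qed
  have Wrec: "W (Suc m) = (\<lambda>\<omega>. (1 - \<beta> * \<alpha> m) * W m \<omega> + \<alpha> m * Y (Suc m) \<omega> + 0)" for m
    unfolding W_def Y_def \<beta>_def by (rule ext) (simp add: algebra_simps)
  have Wprops: "W m \<in> borel_measurable M \<and> integrable M (\<lambda>\<omega>. (W m \<omega>)\<^sup>2) \<and>
      (\<integral>\<omega>. W m \<omega> \<partial>M) = 0 \<and> (\<integral>\<omega>. (W m \<omega>)\<^sup>2 \<partial>M) = \<sigma>\<^sup>2 * lam \<gamma> \<alpha> m \<and>
      (\<forall>j>m. (\<integral>\<omega>. W m \<omega> * Y j \<omega> \<partial>M) = 0)" for m
  proof (induction m)
    case 0
    have "W 0 = (\<lambda>\<omega>. 0)" unfolding W_def by simp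
    thus ?case by simp
  next
    case (Suc m)
    have m1: "Suc m \<ge> 1" by simp
    note IH = Suc.IH
    have Wm: "W m \<in> borel_measurable M" and Wi: "integrable M (\<lambda>\<omega>. (W m \<omega>)\<^sup>2)" using IH by auto
    have Wint: "integrable M (W m)" using P.sqi_int[OF Wm Wi] .
    have q1: "integrable M (\<lambda>\<omega>. ((1 - \<beta> * \<alpha> m) * W m \<omega> + \<alpha> m * Y (Suc m) \<omega> + 0)\<^sup>2)"
      and q2: "(\<integral>\<omega>. ((1 - \<beta> * \<alpha> m) * W m \<omega> + \<alpha> m * Y (Suc m) \<omega> + 0)\<^sup>2 \<partial>M) =
         (1 - \<beta> * \<alpha> m)\<^sup>2 * (\<integral>\<omega>. (W m \<omega>)\<^sup>2 \<partial>M) + (\<alpha> m)\<^sup>2 * (\<integral>\<omega>. (Y (Suc m) \<omega>)\<^sup>2 \<partial>M) + 0\<^sup>2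
       + 2*(1 - \<beta> * \<alpha> m)*\<alpha> m * (\<integral>\<omega>. W m \<omega> * Y (Suc m) \<omega> \<partial>M) + 2*(1 - \<beta> * \<alpha> m)*0 * (\<integral>\<omega>. W m \<omega> \<partial>M)
       + 2*\<alpha> m*0 * (\<integral>\<omega>. Y (Suc m) \<omega> \<partial>M)"
      using P.quad[OF Wm Ym[OF m1] Wi Yi[OF m1]] by blast+
    have s1: "(\<integral>\<omega>. (W (Suc m) \<omega>)\<^sup>2 \<partial>M) = \<sigma>\<^sup>2 * lam \<gamma> \<alpha> (Suc m)"
      unfolding Wrec q2 using IH Y2[OF m1] by (simp add: \<beta>_def algebra_simps)
    have s0: "(\<integral>\<omega>. W (Suc m) \<omega> \<partial>M) = 0"
      unfolding Wrec P.lin[OF Wint Yint[OF m1]] using IH Y0[OF m1] by simp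
    have s3: "(\<integral>\<omega>. W (Suc m) \<omega> * Y j \<omega> \<partial>M) = 0" if "j > Suc m" for j
    proof -
      have j1: "j \<ge> 1" using that by simp
      have "(\<lambda>\<omega>. W (Suc m) \<omega> * Y j \<omega>) = (\<lambda>\<omega>. (1 - \<beta> * \<alpha> m) * (W m \<omega> * Y j \<omega>) + \<alpha> m * (Y (Suc m) \<omega> * Y j \<omega>) + 0)"
        unfolding Wrec by (rule ext) (simp add: algebra_simps)
      moreover have "integrable M (\<lambda>\<omega>. W m \<omega> * Y j \<omega>)" by (rule P.sqi_prod[OF Wm Ym[OF j1] Wi Yi[OF j1]])
      moreover have "integrable M (\<lambda>\<omega>. Y (Suc m) \<omega> * Y j \<omega>)" by (rule P.sqi_prod[OF Ym[OF m1] Ym[OF j1] Yi[OF m1] Yi[OF j1]])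
      ultimately show ?thesis using P.lin IH that Yorth[OF m1 j1] by simp
    qed
    have "W (Suc m) \<in> borel_measurable M" unfolding Wrec using Wm Ym[OF m1] by auto
    moreover have "integrable M (\<lambda>\<omega>. (W (Suc m) \<omega>)\<^sup>2)" unfolding Wrec by (rule q1)
    ultimately show ?case using s0 s1 s3 by blast
  qed
  define L where "L = lam \<gamma> \<alpha> (n - 1)"
  define D where "D = delta \<gamma> \<alpha> (n - 1)"
  define K where "K = (1 - (1 - \<gamma>) * D)\<^sup>2 * c\<^sup>2"
  define N where "N = (1 - \<gamma>) * L * \<sigma>\<^sup>2 + K"
  define Q where "Q = (1 - \<gamma>)\<^sup>2 * L * \<sigma>\<^sup>2 + K + \<sigma>\<^sup>2"
  define F where "F = (\<lambda>a. \<integral>\<omega>. (vbar_last \<gamma> \<alpha> X n a \<omega> - (\<integral>\<omega>'. vhat \<gamma> \<alpha> X n \<omega>' \<partial>M))\<^sup>2 \<partial>M)"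
  have n1: "n \<ge> 1" using assms(10) by simp
  define V where "V = W (n - 1)"
  have Vm: "V \<in> borel_measurable M" and Vi: "integrable M (\<lambda>\<omega>. (V \<omega>)\<^sup>2)"
    and V0: "(\<integral>\<omega>. V \<omega> \<partial>M) = 0" and V2: "(\<integral>\<omega>. (V \<omega>)\<^sup>2 \<partial>M) = \<sigma>\<^sup>2 * L"
    and VY: "(\<integral>\<omega>. V \<omega> * Y n \<omega> \<partial>M) = 0"
    using Wprops[of "n - 1"] n1 unfolding V_def L_def by auto
  have Vint: "integrable M V" using P.sqi_int[OF Vm Vi] .
  have vh: "vhat \<gamma> \<alpha> X n = (\<lambda>\<omega>. \<gamma> * V \<omega> + 1 * Y n \<omega> + (c + \<gamma> * c * D))"
    unfolding vhat_def V_def W_def Y_def D_def by (rule ext) (simp add: algebra_simps)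
  have Evh: "(\<integral>\<omega>. vhat \<gamma> \<alpha> X n \<omega> \<partial>M) = c + \<gamma> * c * D"
    unfolding vh P.lin[OF Vint Yint[OF n1]] using V0 Y0[OF n1] by simp
  have dev: "(\<lambda>\<omega>. (vbar_last \<gamma> \<alpha> X n a \<omega> - (c + \<gamma> * c * D))\<^sup>2) =
      (\<lambda>\<omega>. ((1 - a * (1 - \<gamma>)) * V \<omega> + a * Y n \<omega> + (a - 1) * (c * (1 - (1 - \<gamma>) * D)))\<^sup>2)" for a
    unfolding vbar_last_def vh
    unfolding V_def W_def Y_def D_def by (rule ext) (simp add: algebra_simps)
  have Fa: "F a = (1 - a * (1 - \<gamma>))\<^sup>2 * (\<sigma>\<^sup>2 * L) + a\<^sup>2 * \<sigma>\<^sup>2 + ((a - 1) * (c * (1 - (1 - \<gamma>) * D)))\<^sup>2" for a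
    unfolding F_def Evh dev P.quad(2)[OF Vm Ym[OF n1] Vi Yi[OF n1]]
    using V0 V2 VY Y0[OF n1] Y2[OF n1] by simp
  have Fq: "F a = Q * a\<^sup>2 - 2 * N * a + (L * \<sigma>\<^sup>2 + K)" for a
    unfolding Fa Q_def N_def K_def by (simp add: power2_eq_square algebra_simps)
  have Lb: "0 \<le> lam \<gamma> \<alpha> k \<and> lam \<gamma> \<alpha> k * ((1 - \<gamma>) * (1 + \<gamma>)) \<le> 1" if "k \<le> n - 1" for k
    using that
  proof (induction k)
    case 0 then show ?case by simp
  next
    case (Suc k)
    have k: "k \<le> n - 2" using Suc.prems by simp
    define x where "x = \<alpha> k"
    define b where "b = 1 - \<gamma>"
    define t where "t = lam \<gamma> \<alpha> k"
    have x01: "0 \<le> x" "x \<le> 1" using steps[OF k] unfolding x_def by auto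
    have b01: "0 < b" "b < 1" using g01 unfolding b_def by auto
    have t: "0 \<le> t" "t * (b * (2 - b)) \<le> 1" using Suc.IH Suc.prems unfolding t_def b_def by auto
    have e1: "lam \<gamma> \<alpha> (Suc k) = x\<^sup>2 + (1 - b * x)\<^sup>2 * t" unfolding x_def b_def t_def by simp
    have e2: "(1 + \<gamma>) = 2 - b" unfolding b_def by simp
    have m1: "(1 - b * x)\<^sup>2 * (t * (b * (2 - b))) \<le> (1 - b * x)\<^sup>2 * 1"
      by (rule mult_left_mono) (use t in auto)
    have m2: "x\<^sup>2 * (b * (2 - b)) + (1 - b * x)\<^sup>2 = 1 - 2 * (b * x * (1 - x))"
      by (simp add: power2_eq_square algebra_simps)
    have m3: "0 \<le> b * x * (1 - x)" using x01 b01 by simp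
    have m4: "(x\<^sup>2 + (1 - b * x)\<^sup>2 * t) * (b * (2 - b)) = x\<^sup>2 * (b * (2 - b)) + (1 - b * x)\<^sup>2 * (t * (b * (2 - b)))"
      by (simp add: algebra_simps)
    have "0 \<le> x\<^sup>2 + (1 - b * x)\<^sup>2 * t" using t by simp
    moreover have "(x\<^sup>2 + (1 - b * x)\<^sup>2 * t) * (b * (2 - b)) \<le> 1" using m1 m2 m3 m4 by linarith
    ultimately show ?case unfolding e1 e2 b_def[symmetric] by simp
  qed
  have L0: "0 \<le> L" and L1: "L * ((1 - \<gamma>) * (1 + \<gamma>)) \<le> 1" using Lb[of "n - 1"] unfolding L_def by auto
  have K0: "0 \<le> K" unfolding K_def by simp
  have s2: "0 < \<sigma>\<^sup>2" using assms(9) by simp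
  have Q0: "0 < Q" unfolding Q_def using L0 K0 s2 g01 by (simp add: add_nonneg_pos)
  have N0: "0 \<le> N" unfolding N_def using L0 K0 s2 g01 by simp
  have NQ: "N \<le> Q"
  proof -
    have "(1 - \<gamma>) * L * \<gamma> \<le> (1 - \<gamma>) * L * (1 + \<gamma>)"
      by (rule mult_left_mono) (use L0 g01 in auto)
    also have "\<dots> \<le> 1" using L1 by (simp add: algebra_simps)
    finally have "(1 - \<gamma>) * L * \<gamma> * \<sigma>\<^sup>2 \<le> 1 * \<sigma>\<^sup>2" using s2 by (intro mult_right_mono) auto
    thus ?thesis unfolding N_def Q_def by (simp add: power2_eq_square algebra_simps)
  qed
  define A where "A = N / Q"
  have QA: "Q * A = N" unfolding A_def using Q0 by simp
  have A01: "A \<in> {0..1}" unfolding A_def using Q0 N0 NQ by auto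
  have diff: "F a - F A = Q * (a - A)\<^sup>2" for a
  proof -
    have "F a - F A = Q * a\<^sup>2 - Q * A\<^sup>2 - 2 * (Q * A) * a + 2 * (Q * A) * A"
      unfolding Fq QA by simp
    thus ?thesis by (simp add: power2_eq_square algebra_simps)
  qed
  have strict: "\<forall>a\<in>{0..1}. a \<noteq> A \<longrightarrow> F A < F a"
  proof (intro ballI impI)
    fix a assume "a \<noteq> A"
    hence "0 < Q * (a - A)\<^sup>2" using Q0 by simp
    thus "F A < F a" using diff[of a] by linarith
  qed
  have Aeq: "A = ((1 - \<gamma>) * L * \<sigma>\<^sup>2 + (1 - (1 - \<gamma>) * D)\<^sup>2 * c\<^sup>2) /
             ((1 - \<gamma>)\<^sup>2 * L * \<sigma>\<^sup>2 + (1 - (1 - \<gamma>) * D)\<^sup>2 * c\<^sup>2 + \<sigma>\<^sup>2)"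
    unfolding A_def N_def Q_def K_def by simp
  show ?thesis
    unfolding Let_def F_def[symmetric] L_def[symmetric] D_def[symmetric] Aeq[symmetric]
    using A01 strict by blast
qed

end
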